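(* Let $k\ge1$, $n_0>1$, and let $A_0,\dots,A_{k-1}$ belong to the Bloch space $\mathfrak B$, not all identically zero. Suppose there is $\nu\in[0,1)$ such that for every $\theta\in[0,2\pi)$ the point $z_\theta=\nu e^{i\theta}$ satisfies $A_j(z_\theta)\ne0$ for some $j\in\{0,\dots,k-1\}$. Then every solution $f$ in $\mathbb D$ of $$(f^{(k)})^{n_0}+A_{k-1}(z)(f^{(k-1)})^{n_0}+\cdots+A_1(z)(f')^{n_0}+A_0(z)f^{n_0}=0$$ belongs to $\bigcap_{0<s<\infty}\mathfrak B^s$.
   Context: $\mathbb D$ is the open unit disk. For $s>0$, the Bloch-type space $\mathfrak B^s$ consists of analytic $g$ on $\mathbb D$ with $|g(0)|+\sup_{z\in\mathbb D}|g'(z)|(1-|z|^2)^s<\infty$; the Bloch space is $\mathfrak B=\mathfrak B^1$. A solution is an analytic function on $\mathbb D$ satisfying the equation, where the real powers $(f^{(j)})^{n_0}$ are understood via some choice of branches, so that $|(f^{(j)})^{n_0}|=|f^{(j)}|^{n_0}$. *)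

theory Defs
  imports "HOL-Analysis.Analysis"
begin

definition bloch_type :: "real \<Rightarrow> (complex \<Rightarrow> complex) set" where
  "bloch_type s = {g. g holomorphic_on ball 0 1 \<and>
     (\<exists>C. \<forall>z\<in>ball 0 1. norm (deriv g z) * (1 - (norm z)\<^sup>2) powr s \<le> C)}"

text \<open>p is a value of some branch of the real power w^a:
  p = exp (a * L) for some logarithm L of w (and 0 if w = 0).\<close>
definition power_branch_value :: "real \<Rightarrow> complex \<Rightarrow> complex \<Rightarrow> bool" where
  "power_branch_value a w p \<longleftrightarrow>
     (if w = 0 then p = 0 else (\<exists>L. exp L = w \<and> p = exp (complex_of_real a * L)))"

end

theory Submission imports Defs "HOL-Complex_Analysis.Complex_Analysis"
begin

lemma pbv_norm:
  assumes "power_branch_value a w p"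
  shows "cmod p = cmod w powr a"
proof (cases "w = 0")
  case True then show ?thesis using assms by (simp add: power_branch_value_def)
next
  case False
  then obtain L where L: "exp L = w" "p = exp (complex_of_real a * L)"
    using assms by (auto simp: power_branch_value_def)
  have "cmod w = exp (Re L)" using L norm_exp_eq_Re by metis
  hence "cmod w powr a = exp (a * Re L)" by (simp add: powr_def)
  moreover have "cmod p = exp (a * Re L)" using L by (simp add: norm_exp_eq_Re)
  ultimately show ?thesis by simp
qed

lemma ray_deriv:
  assumes h: "h holomorphic_on ball 0 1" and w: "cmod \<omega> = 1" and t: "\<bar>t\<bar> < 1"
  shows "((\<lambda>t. h (of_real t * \<omega>)) has_vector_derivative (\<omega> * deriv h (of_real t * \<omega>))) (at t)"
proof -
  have in_ball: "of_real t * \<omega> \<in> ball 0 1" using w t by (simp add: norm_mult)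
  have d1: "((\<lambda>t. of_real t * \<omega>) has_vector_derivative \<omega>) (at t)"
  proof -
    have "((\<lambda>z. z * \<omega>) has_field_derivative \<omega>) (at (of_real t))"
      by (auto intro!: derivative_eq_intros)
    from has_vector_derivative_real_field[OF this] show ?thesis by simp
  qed
  have d2: "(h has_field_derivative deriv h (of_real t * \<omega>)) (at (of_real t * \<omega>))"
    using h in_ball by (intro holomorphic_derivI) auto
  from field_vector_diff_chain_at[OF d1 d2] show ?thesis by (simp add: o_def)
qed

lemma log_powr_bound:
  fixes r s :: real
  assumes "0 \<le> r" "r < 1" "s > 0"
  shows "(1 - r^2) powr s * (- ln (1 - r)) \<le> 2 powr s / s"
proof -
  define x where "x = 1 / (1 - r)"
  have x: "x \<ge> 1" using assms by (simp add: x_def)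
  have "- ln (1 - r) = ln x" using assms by (simp add: x_def ln_div)
  also have "ln x = ln (x powr s) / s" using x assms by (simp add: ln_powr)
  also have "\<dots> \<le> x powr s / s"
    using ln_le_minus_one[of "x powr s"] x assms by (intro divide_right_mono) auto
  finally have l: "- ln (1 - r) \<le> x powr s / s" .
  have "0 \<le> (1 - r)^2" by simp
  hence "1 - r^2 \<le> 2 * (1 - r)" by (simp add: power2_eq_square algebra_simps)
  hence p: "(1 - r^2) powr s \<le> (2 * (1 - r)) powr s"
    using assms by (intro powr_mono2) (auto simp: power2_eq_square abs_square_le_1 mult_le_one)
  have "(1 - r^2) powr s * (- ln (1 - r)) \<le> (2 * (1 - r)) powr s * (x powr s / s)"
    using assms by (intro mult_mono p l) auto
  also have "\<dots> = 2 powr s * ((1 - r) powr s * x powr s) / s"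
    using assms powr_mult[of 2 "1-r" s] by simp
  also have "(1 - r) powr s * x powr s = 1"
    using assms powr_mult[of "1-r" x s] by (simp add: x_def)
  also have "2 powr s * 1 / s = 2 powr s / s" by simp
  finally show ?thesis .
qed

lemma root_bound:
  fixes x y S n0 :: real
  assumes "x \<ge> 0" "y \<ge> 0" "S \<ge> 0" "n0 > 1" "x powr n0 \<le> S * y powr n0"
  shows "x \<le> (1 + S) * y"
proof -
  have "x = (x powr n0) powr (1/n0)" using assms by (simp add: powr_powr)
  also have "\<dots> \<le> (S * y powr n0) powr (1/n0)" using assms by (intro powr_mono2) auto
  also have "\<dots> = S powr (1/n0) * y" using assms by (simp add: powr_mult powr_powr)
  also have "S powr (1/n0) \<le> 1 + S"
  proof (cases "S \<le> 1")
    case True then have "S powr (1/n0) \<le> 1 powr (1/n0)" using assms by (intro powr_mono2) auto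
    then show ?thesis using assms by simp
  next
    case False then have "S powr (1/n0) \<le> S powr 1" using assms by (intro powr_mono) auto
    then show ?thesis using assms by simp
  qed
  hence "S powr (1/n0) * y \<le> (1 + S) * y" using assms by (intro mult_right_mono) auto
  finally show ?thesis .
qed

lemma bloch_growth:
  assumes h: "h holomorphic_on ball 0 1"
    and C: "\<forall>z\<in>ball 0 1. cmod (deriv h z) * (1 - (cmod z)\<^sup>2) powr 1 \<le> C"
    and z: "z \<in> ball 0 1"
  shows "cmod (h z) \<le> cmod (h 0) + C * (- ln (1 - cmod z))"
proof (cases "z = 0")
  case True then show ?thesis by simp
next
  case False
  define r where "r = cmod z"
  define \<omega> where "\<omega> = z / of_real r"
  have r: "0 < r" "r < 1" using False z by (auto simp: r_def)
  have w: "cmod \<omega> = 1" using r by (simp add: \<omega>_def r_def norm_divide)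
  have zr: "z = of_real r * \<omega>" using r by (simp add: \<omega>_def)
  have C0: "C \<ge> 0" using C[rule_format, of 0] by simp (meson norm_ge_zero order_trans)
  define g where "g = (\<lambda>t::real. h (of_real t * \<omega>))"
  have gd: "\<And>t. \<bar>t\<bar> < 1 \<Longrightarrow> (g has_vector_derivative (\<omega> * deriv h (of_real t * \<omega>))) (at t)"
    unfolding g_def using ray_deriv[OF h w] by blast
  have "norm (g r - g 0) \<le> C * (- ln (1 - r)) - C * (- ln (1 - 0))"
  proof (rule differentiable_bound_general[OF r(1), where f'="\<lambda>t. \<omega> * deriv h (of_real t * \<omega>)"
      and \<phi>'="\<lambda>t. C / (1 - t)"])
    show "continuous_on {0..r} g"
    proof (intro continuous_at_imp_continuous_on ballI)
      fix x assume "x \<in> {0..r}"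
      then have "\<bar>x\<bar> < 1" using r by auto
      from has_vector_derivative_continuous[OF gd[OF this]] show "isCont g x" .
    qed
    show "continuous_on {0..r} (\<lambda>t. C * - ln (1 - t))"
      using r by (intro continuous_intros) auto
    fix t assume t: "0 < t" "t < r"
    show "(g has_vector_derivative \<omega> * deriv h (of_real t * \<omega>)) (at t)" using gd t r by auto
    show "((\<lambda>t. C * - ln (1 - t)) has_vector_derivative C / (1 - t)) (at t)"
      using t r by (auto intro!: derivative_eq_intros simp: has_real_derivative_iff_has_vector_derivative[symmetric] field_simps)
    have inb: "of_real t * \<omega> \<in> ball 0 1" using t r w by (simp add: norm_mult)
    have nt: "cmod (of_real t * \<omega>) = t" using t w by (simp add: norm_mult)
    have "t * t < 1 * 1" using t r by (intro mult_strict_mono) auto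
    hence pos: "0 < 1 - t^2" by (simp add: power2_eq_square)
    show "norm (\<omega> * deriv h (of_real t * \<omega>)) \<le> C / (1 - t)"
    proof -
      have "cmod (deriv h (of_real t * \<omega>)) * (1 - t^2) \<le> C"
        using C[rule_format, OF inb] pos by (simp add: nt)
      hence "cmod (deriv h (of_real t * \<omega>)) \<le> C / (1 - t^2)" using pos by (simp add: field_simps)
      also have "\<dots> \<le> C / (1 - t)"
        using t r C0 pos by (intro divide_left_mono) (auto simp: power2_eq_square )
      finally show ?thesis using w by (simp add: norm_mult)
    qed
  qed
  hence "cmod (h z - h 0) \<le> C * (- ln (1 - r))" by (simp add: g_def zr)
  hence "cmod (h z) \<le> cmod (h 0) + C * (- ln (1 - r))" using norm_triangle_ineq2[of "h z" "h 0"] by simp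
  then show ?thesis by (simp add: r_def)
qed

lemma gronwall_ray:
  fixes u :: "nat \<Rightarrow> real \<Rightarrow> complex" and k :: nat and \<omega> :: complex and M CC r :: real
  defines "E \<equiv> \<lambda>t. 1 + (\<Sum>j<k. (cmod (u j t))\<^sup>2)"
  assumes der: "\<And>j t. j < k \<Longrightarrow> \<bar>t\<bar> < 1 \<Longrightarrow> (u j has_vector_derivative (\<omega> * u (Suc j) t)) (at t)"
    and w: "cmod \<omega> = 1" and M: "M \<ge> 1" and CC: "CC \<ge> 0"
    and bk: "\<And>t. 0 \<le> t \<Longrightarrow> t < 1 \<Longrightarrow> cmod (u k t) \<le> (M + CC * (- ln (1 - t))) * sqrt (E t)"
    and r: "0 \<le> r" "r < 1"
  shows "E r \<le> E 0 * exp (2 * k * (M + CC))"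
proof -
  define g where "g = (\<lambda>t::real. M + CC * (- ln (1 - t)))"
  define G where "G = (\<lambda>t::real. M * t + CC * ((1 - t) * ln (1 - t) + t))"
  define E' where "E' = (\<lambda>t. \<Sum>j<k. Re (u j t * cnj (\<omega> * u (Suc j) t) + \<omega> * u (Suc j) t * cnj (u j t)))"
  define F where "F = (\<lambda>t. E t * exp (- (2 * k) * G t))"
  have Eeq: "E = (\<lambda>t. 1 + (\<Sum>j<k. Re (u j t * cnj (u j t))))"
    by (rule ext) (simp add: E_def complex_norm_square[symmetric])
  have Ed: "(E has_field_derivative E' t) (at t)" if t: "\<bar>t\<bar> < 1" for t
  proof -
    have "((\<lambda>t. 1 + (\<Sum>j<k. Re (u j t * cnj (u j t)))) has_field_derivative 0 + E' t) (at t)"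
      unfolding E'_def
      by (intro derivative_intros has_field_derivative_Re has_vector_derivative_mult
          has_vector_derivative_cnj der t) auto
    then show ?thesis by (simp add: Eeq)
  qed
  have E1: "E t \<ge> 1" for t unfolding E_def by (simp add: sum_nonneg)
  have uj: "cmod (u j t) \<le> sqrt (E t)" if "j < k" for j t
  proof (rule real_le_rsqrt)
    have "(cmod (u j t))\<^sup>2 \<le> (\<Sum>j<k. (cmod (u j t))\<^sup>2)"
      using that by (intro member_le_sum) auto
    then show "(cmod (u j t))\<^sup>2 \<le> E t" by (simp add: E_def)
  qed
  have g1: "g t \<ge> 1" if "0 \<le> t" "t < 1" for t
  proof -
    have "ln (1 - t) \<le> 0" using that by simp
    hence "CC * ln (1 - t) \<le> 0" using CC by (simp add: mult_nonneg_nonpos)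
    then show ?thesis using M by (simp add: g_def)
  qed
  have usj: "cmod (u (Suc j) t) \<le> g t * sqrt (E t)" if "j < k" "0 \<le> t" "t < 1" for j t
  proof (cases "Suc j < k")
    case True
    have "cmod (u (Suc j) t) \<le> 1 * sqrt (E t)" using uj[OF True] by simp
    also have "\<dots> \<le> g t * sqrt (E t)" using g1[OF that(2,3)] E1[of t] by (intro mult_right_mono) auto
    finally show ?thesis .
  next
    case False then have "Suc j = k" using that by simp
    then show ?thesis using bk[OF that(2,3)] by (simp add: g_def)
  qed
  have E'b: "E' t \<le> 2 * k * g t * E t" if "0 \<le> t" "t < 1" for t
  proof -
    have "E' t \<le> (\<Sum>j<k. 2 * g t * E t)"
      unfolding E'_def
    proof (rule sum_mono)
      fix j assume j: "j \<in> {..<k}"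
      let ?a = "u j t" and ?b = "\<omega> * u (Suc j) t"
      have "Re (?a * cnj ?b + ?b * cnj ?a) \<le> cmod (?a * cnj ?b + ?b * cnj ?a)" by (rule complex_Re_le_cmod)
      also have "\<dots> \<le> cmod (?a * cnj ?b) + cmod (?b * cnj ?a)" by (rule norm_triangle_ineq)
      also have "\<dots> = 2 * (cmod (u j t) * cmod (u (Suc j) t))" using w by (simp add: norm_mult)
      also have "\<dots> \<le> 2 * (sqrt (E t) * (g t * sqrt (E t)))"
        using j uj usj that E1[of t] by (intro mult_left_mono mult_mono) auto
      also have "\<dots> = 2 * g t * E t" using E1[of t] by (simp add: algebra_simps)
      finally show "Re (?a * cnj ?b + ?b * cnj ?a) \<le> 2 * g t * E t" .
    qed
    then show ?thesis by simp
  qed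
  have Gd: "(G has_field_derivative g t) (at t)" if "\<bar>t\<bar> < 1" for t
  proof -
    have ne: "1 - t \<noteq> 0" using that by auto
    show ?thesis unfolding G_def g_def using that
      by (auto intro!: derivative_eq_intros simp: ne)
  qed
  have Fd: "(F has_field_derivative (E' t * exp (- (2 * k) * G t) + E t * (exp (- (2 * k) * G t) * (- (2 * k) * g t)))) (at t)"
    if "\<bar>t\<bar> < 1" for t
    unfolding F_def using that Ed Gd
    by (auto intro!: derivative_eq_intros)
  have "F r \<le> F 0"
  proof (rule DERIV_nonpos_imp_decreasing_open[OF r(1)])
    fix t assume t: "0 < t" "t < r"
    have le: "E' t \<le> 2 * k * g t * E t" using t r by (intro E'b) auto
    have "E' t * exp (- (2 * k) * G t) + E t * (exp (- (2 * k) * G t) * (- (2 * k) * g t))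
        = (E' t - 2 * k * g t * E t) * exp (- (2 * k) * G t)" by (simp add: algebra_simps)
    also have "\<dots> \<le> 0" using le by (intro mult_nonpos_nonneg) auto
    finally show "\<exists>y. (F has_real_derivative y) (at t) \<and> y \<le> 0" using Fd[of t] t r by auto
  next
    show "continuous_on {0..r} F"
    proof (intro continuous_at_imp_continuous_on ballI)
      fix x assume "x \<in> {0..r}"
      then have "\<bar>x\<bar> < 1" using r by auto
      from DERIV_isCont[OF Fd[OF this]] show "isCont F x" .
    qed
  qed
  hence "E r * exp (- (2 * k) * G r) \<le> E 0" by (simp add: F_def G_def)
  hence Er: "E r \<le> E 0 * exp ((2 * k) * G r)" by (simp add: exp_minus field_simps)
  have "ln (1 - r) \<le> 0" using r by simp
  hence "(1 - r) * ln (1 - r) \<le> 0" using r by (intro mult_nonneg_nonpos) auto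
  hence "G r \<le> M + CC" unfolding G_def using r M CC
    by (smt (verit) mult_left_le mult_left_mono)
  hence "exp ((2 * k) * G r) \<le> exp (2 * k * (M + CC))" by (intro exp_mono mult_left_mono) auto
  with Er show ?thesis using E1[of 0] by (smt (verit) mult_left_mono)
qed

theorem theorem3p5:
  fixes k :: nat and n0 :: real
    and A :: "nat \<Rightarrow> complex \<Rightarrow> complex"
    and f :: "complex \<Rightarrow> complex"
    and P :: "nat \<Rightarrow> complex \<Rightarrow> complex"
  assumes "k \<ge> 1" and "n0 > 1"
    and "\<forall>j<k. A j \<in> bloch_type 1"
    and "\<exists>j<k. \<exists>z\<in>ball 0 1. A j z \<noteq> 0"
    and "\<exists>\<nu>::real. 0 \<le> \<nu> \<and> \<nu> < 1 \<and>
           (\<forall>\<theta>\<in>{0..<2*pi}. \<exists>j<k. A j (complex_of_real \<nu> * cis \<theta>) \<noteq> 0)"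
    and "f holomorphic_on ball 0 1"
    and "\<forall>j\<le>k. \<forall>z\<in>ball 0 1. power_branch_value n0 ((deriv ^^ j) f z) (P j z)"
    and "\<forall>z\<in>ball 0 1. P k z + (\<Sum>j<k. A j z * P j z) = 0"
  shows "\<forall>s>0. f \<in> bloch_type s"
proof -
  note k = assms(1) and n0 = assms(2) and Ab = assms(3) and fh = assms(6)
    and Pb = assms(7) and eqn = assms(8)
  define D where "D = (\<lambda>j. (deriv ^^ j) f)"
  have Dh: "D j holomorphic_on ball 0 1" for j
    unfolding D_def using fh by (intro holomorphic_higher_deriv) auto
  have DS: "deriv (D j) = D (Suc j)" for j by (simp add: D_def)
  have "\<forall>j. \<exists>c. j < k \<longrightarrow> (\<forall>z\<in>ball 0 1. cmod (deriv (A j) z) * (1 - (cmod z)\<^sup>2) powr 1 \<le> c)"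
    using Ab by (auto simp: bloch_type_def)
  then obtain C where C: "\<And>j. j < k \<Longrightarrow> \<forall>z\<in>ball 0 1. cmod (deriv (A j) z) * (1 - (cmod z)\<^sup>2) powr 1 \<le> C j"
    by metis
  have Ah: "\<And>j. j < k \<Longrightarrow> A j holomorphic_on ball 0 1" using Ab by (auto simp: bloch_type_def)
  have C0: "C j \<ge> 0" if "j < k" for j
    using C[OF that, rule_format, of 0] by simp (meson norm_ge_zero order_trans)
  define L where "L = (\<lambda>t::real. - ln (1 - t))"
  define M where "M = 1 + (\<Sum>j<k. cmod (A j 0))"
  define CC where "CC = (\<Sum>j<k. C j)"
  have M1: "M \<ge> 1" by (simp add: M_def sum_nonneg)
  have CC0: "CC \<ge> 0" unfolding CC_def using C0 by (intro sum_nonneg) auto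
  have Sb: "1 + (\<Sum>j<k. cmod (A j z)) \<le> M + CC * L (cmod z)" if z: "z \<in> ball 0 1" for z
  proof -
    have "(\<Sum>j<k. cmod (A j z)) \<le> (\<Sum>j<k. cmod (A j 0) + C j * L (cmod z))"
      using bloch_growth[OF Ah C z] by (intro sum_mono) (auto simp: L_def)
    also have "\<dots> = (\<Sum>j<k. cmod (A j 0)) + CC * L (cmod z)"
      by (simp add: sum.distrib CC_def sum_distrib_right)
    finally show ?thesis by (simp add: M_def)
  qed
  define E0 where "E0 = 1 + (\<Sum>j<k. (cmod (D j 0))\<^sup>2)"
  define K where "K = sqrt (E0 * exp (2 * k * (M + CC)))"
  have fd: "cmod (deriv f z) \<le> (M + CC * L (cmod z)) * K" if z: "z \<in> ball 0 1" for z
  proof -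
    define \<omega> where "\<omega> = (if z = 0 then 1 else z / of_real (cmod z))"
    define r where "r = cmod z"
    have w: "cmod \<omega> = 1" by (simp add: \<omega>_def norm_divide)
    have zr: "z = of_real r * \<omega>" by (simp add: \<omega>_def r_def)
    have r: "0 \<le> r" "r < 1" using z by (auto simp: r_def)
    define u where "u = (\<lambda>j (t::real). D j (of_real t * \<omega>))"
    define E where "E = (\<lambda>t. 1 + (\<Sum>j<k. (cmod (u j t))\<^sup>2))"
    have E1: "E t \<ge> 1" for t unfolding E_def by (simp add: sum_nonneg)
    have uj: "cmod (u j t) \<le> sqrt (E t)" if "j < k" for j t
    proof (rule real_le_rsqrt)
      have "(cmod (u j t))\<^sup>2 \<le> (\<Sum>j<k. (cmod (u j t))\<^sup>2)"
        using that by (intro member_le_sum) auto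
      then show "(cmod (u j t))\<^sup>2 \<le> E t" by (simp add: E_def)
    qed
    have bk: "cmod (u k t) \<le> (M + CC * L t) * sqrt (E t)" if t: "0 \<le> t" "t < 1" for t
    proof -
      define y where "y = of_real t * \<omega>"
      have y: "y \<in> ball 0 1" "cmod y = t" using t w by (auto simp: y_def norm_mult)
      have Pn: "cmod (P j y) = cmod (u j t) powr n0" if "j \<le> k" for j
        using pbv_norm Pb that y by (auto simp: u_def y_def D_def)
      have "cmod (u k t) powr n0 = cmod (\<Sum>j<k. A j y * P j y)"
        using eqn y Pn[of k] by (metis add_eq_0_iff norm_minus_cancel order_refl)
      also have "\<dots> \<le> (\<Sum>j<k. cmod (A j y) * cmod (u j t) powr n0)"
        by (rule order_trans[OF norm_sum]) (simp add: norm_mult Pn)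
      also have "\<dots> \<le> (\<Sum>j<k. cmod (A j y) * sqrt (E t) powr n0)"
        using uj n0 by (intro sum_mono mult_left_mono powr_mono2) auto
      also have "\<dots> = (\<Sum>j<k. cmod (A j y)) * sqrt (E t) powr n0"
        by (simp add: sum_distrib_right)
      finally have "cmod (u k t) \<le> (1 + (\<Sum>j<k. cmod (A j y))) * sqrt (E t)"
        using n0 E1[of t] by (intro root_bound) (auto simp: sum_nonneg)
      also have "\<dots> \<le> (M + CC * L t) * sqrt (E t)"
        using Sb[OF y(1)] y(2) E1[of t] by (intro mult_right_mono) auto
      finally show ?thesis .
    qed
    have der: "(u j has_vector_derivative (\<omega> * u (Suc j) t)) (at t)" if "\<bar>t\<bar> < 1" for j t
      using ray_deriv[OF Dh w that, of j] by (simp add: u_def DS)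
    have "E r \<le> E 0 * exp (2 * k * (M + CC))"
      unfolding E_def
      by (rule gronwall_ray[where u=u and k=k and \<omega>=\<omega> and M=M and CC=CC and r=r])
        (use der w M1 CC0 r bk in \<open>auto simp: E_def L_def\<close>)
    also have "E 0 = E0" by (simp add: E_def E0_def u_def)
    finally have ErK: "sqrt (E r) \<le> K" by (simp add: K_def)
    have gpos: "1 \<le> M + CC * L r"
    proof -
      have "ln (1 - r) \<le> 0" using r by simp
      hence "CC * ln (1 - r) \<le> 0" using CC0 by (simp add: mult_nonneg_nonpos)
      then show ?thesis using M1 by (simp add: L_def)
    qed
    have K0: "K \<ge> 0" by (simp add: K_def E0_def sum_nonneg)
    have "deriv f z = u 1 r" by (simp add: u_def D_def zr[symmetric])
    moreover have "cmod (u 1 r) \<le> (M + CC * L r) * K"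
    proof (cases "k = 1")
      case True
      then have "cmod (u 1 r) \<le> (M + CC * L r) * sqrt (E r)" using bk r by auto
      also have "\<dots> \<le> (M + CC * L r) * K" using ErK gpos by (intro mult_left_mono) auto
      finally show ?thesis .
    next
      case False
      then have "cmod (u 1 r) \<le> 1 * K" using uj[of 1 r] k ErK by auto
      also have "\<dots> \<le> (M + CC * L r) * K" using gpos K0 by (intro mult_right_mono) auto
      finally show ?thesis .
    qed
    ultimately show ?thesis by (simp add: r_def)
  qed
  show ?thesis
  proof (intro allI impI)
    fix s :: real assume s: "s > 0"
    have "\<forall>z\<in>ball 0 1. cmod (deriv f z) * (1 - (cmod z)\<^sup>2) powr s \<le> K * (M + CC * (2 powr s / s))"
    proof
      fix z :: complex assume z: "z \<in> ball 0 1"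
      define r where "r = cmod z"
      have r: "0 \<le> r" "r < 1" using z by (auto simp: r_def)
      have q: "0 \<le> (1 - r\<^sup>2) powr s" by simp
      have q1: "(1 - r\<^sup>2) powr s \<le> 1"
      proof -
        have "r\<^sup>2 < 1" using r by (simp add: abs_square_less_1)
        hence "(1 - r\<^sup>2) powr s \<le> 1 powr s" using s r by (intro powr_mono2) auto
        then show ?thesis by simp
      qed
      have Lr: "(1 - r\<^sup>2) powr s * L r \<le> 2 powr s / s" using log_powr_bound[OF r s] by (simp add: L_def)
      have K0: "K \<ge> 0" by (simp add: K_def E0_def sum_nonneg)
      have "cmod (deriv f z) * (1 - r\<^sup>2) powr s \<le> ((M + CC * L r) * K) * (1 - r\<^sup>2) powr s"
        using fd[OF z] q by (intro mult_right_mono) (auto simp: r_def)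
      also have "\<dots> = K * (M * (1 - r\<^sup>2) powr s + CC * ((1 - r\<^sup>2) powr s * L r))"
        by (simp add: algebra_simps)
      also have "\<dots> \<le> K * (M + CC * (2 powr s / s))"
        using K0 M1 CC0 q1 Lr by (intro mult_left_mono add_mono mult_left_mono) (auto intro: mult_left_le)
      finally show "cmod (deriv f z) * (1 - (cmod z)\<^sup>2) powr s \<le> K * (M + CC * (2 powr s / s))"
        by (simp add: r_def)
    qed
    then show "f \<in> bloch_type s" using fh by (auto simp: bloch_type_def)
  qed
qed

end
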